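(* Let $X$ be a set, $B=(B,+,0)$ a unitary magma and $(A,k,q,s,p)$ a retraction point from $X$ to $B$. Let $Z$ be a unitary magma and $g\colon Z\to B$ a morphism of unitary magmas, and let $A\times_B Z=\{(a,z)\in A\times Z\mid p(a)=g(z)\}$ (a sub-unitary-magma of the product $A\times Z$), with projections $\pi_1,\pi_2$. Then $$\big(A\times_B Z,\ \langle k,0\rangle,\ q\pi_1,\ \langle sg,1\rangle,\ \pi_2\big)$$ is a retraction point from $X$ to $Z$, where $\langle k,0\rangle(x)=(k(x),0)$ and $\langle sg,1\rangle(z)=(s(g(z)),z)$.
   Context: A unitary magma is a set with a binary operation $+$ and an element $0$ with $b+0=b=0+b$ for all $b$; morphisms preserve $+$ and $0$; the product $A\times Z$ has componentwise operation. Given a set $X$ and a unitary magma $B$, a retraction point from $X$ to $B$ is a tuple $(A,k,q,s,p)$ where $A=(A,+,0)$ is a unitary magma, $k\colon X\to A$ and $q\colon A\to X$ are maps, $s\colon B\to A$ and $p\colon A\to B$ are morphisms of unitary magmas, and $p(s(b))=b$, $q(k(x))=x$, $p(k(x))=0$, $q(s(b))=q(0)$, and $k(q(a))+s(p(a))=a$ for all $x\in X$, $b\in B$, $a\in A$. *)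

theory Defs
  imports Main
begin

definition unitary_magma :: "'a set \<Rightarrow> ('a \<Rightarrow> 'a \<Rightarrow> 'a) \<Rightarrow> 'a \<Rightarrow> bool" where
  "unitary_magma M f e \<longleftrightarrow> e \<in> M \<and> (\<forall>a\<in>M. \<forall>b\<in>M. f a b \<in> M)
     \<and> (\<forall>b\<in>M. f b e = b \<and> f e b = b)"

definition um_hom :: "'a set \<Rightarrow> ('a \<Rightarrow> 'a \<Rightarrow> 'a) \<Rightarrow> 'a \<Rightarrow>
    'b set \<Rightarrow> ('b \<Rightarrow> 'b \<Rightarrow> 'b) \<Rightarrow> 'b \<Rightarrow> ('a \<Rightarrow> 'b) \<Rightarrow> bool" where
  "um_hom M f e M' f' e' h \<longleftrightarrow> (\<forall>a\<in>M. h a \<in> M')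
     \<and> (\<forall>a\<in>M. \<forall>b\<in>M. h (f a b) = f' (h a) (h b)) \<and> h e = e'"

definition retraction_point :: "'x set \<Rightarrow> 'b set \<Rightarrow> ('b \<Rightarrow> 'b \<Rightarrow> 'b) \<Rightarrow> 'b \<Rightarrow>
    'a set \<Rightarrow> ('a \<Rightarrow> 'a \<Rightarrow> 'a) \<Rightarrow> 'a \<Rightarrow>
    ('x \<Rightarrow> 'a) \<Rightarrow> ('a \<Rightarrow> 'x) \<Rightarrow> ('b \<Rightarrow> 'a) \<Rightarrow> ('a \<Rightarrow> 'b) \<Rightarrow> bool" where
  "retraction_point X B addB zB A addA zA k q s p \<longleftrightarrow>
     unitary_magma A addA zA
     \<and> (\<forall>x\<in>X. k x \<in> A) \<and> (\<forall>a\<in>A. q a \<in> X)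
     \<and> um_hom B addB zB A addA zA s
     \<and> um_hom A addA zA B addB zB p
     \<and> (\<forall>b\<in>B. p (s b) = b)
     \<and> (\<forall>x\<in>X. q (k x) = x)
     \<and> (\<forall>x\<in>X. p (k x) = zB)
     \<and> (\<forall>b\<in>B. q (s b) = q zA)
     \<and> (\<forall>a\<in>A. addA (k (q a)) (s (p a)) = a)"

end

theory Submission
  imports Defs
begin

theorem proposition2p2:
  fixes X :: "'x set"
    and B :: "'b set" and addB :: "'b \<Rightarrow> 'b \<Rightarrow> 'b" and zB :: 'b
    and A :: "'a set" and addA :: "'a \<Rightarrow> 'a \<Rightarrow> 'a" and zA :: 'a
    and k :: "'x \<Rightarrow> 'a" and q :: "'a \<Rightarrow> 'x" and s :: "'b \<Rightarrow> 'a" and p :: "'a \<Rightarrow> 'b"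
    and Z :: "'z set" and addZ :: "'z \<Rightarrow> 'z \<Rightarrow> 'z" and zZ :: 'z
    and g :: "'z \<Rightarrow> 'b"
  assumes "unitary_magma B addB zB"
    and "retraction_point X B addB zB A addA zA k q s p"
    and "unitary_magma Z addZ zZ"
    and "um_hom Z addZ zZ B addB zB g"
  shows "retraction_point X Z addZ zZ
           {(a, z). a \<in> A \<and> z \<in> Z \<and> p a = g z}
           (\<lambda>(a, z) (a', z'). (addA a a', addZ z z')) (zA, zZ)
           (\<lambda>x. (k x, zZ)) (\<lambda>az. q (fst az)) (\<lambda>z. (s (g z), z)) snd"
proof -
  have B0: "zB \<in> B" and Bc: "\<And>a b. a \<in> B \<Longrightarrow> b \<in> B \<Longrightarrow> addB a b \<in> B"
    and Bu: "\<And>b. b \<in> B \<Longrightarrow> addB b zB = b \<and> addB zB b = b"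
    using assms(1) unfolding unitary_magma_def by auto
  have A0: "zA \<in> A" and Ac: "\<And>a b. a \<in> A \<Longrightarrow> b \<in> A \<Longrightarrow> addA a b \<in> A"
    and Au: "\<And>b. b \<in> A \<Longrightarrow> addA b zA = b \<and> addA zA b = b"
    and kA: "\<And>x. x \<in> X \<Longrightarrow> k x \<in> A" and qX: "\<And>a. a \<in> A \<Longrightarrow> q a \<in> X"
    and sA: "\<And>b. b \<in> B \<Longrightarrow> s b \<in> A"
    and sh: "\<And>a b. a \<in> B \<Longrightarrow> b \<in> B \<Longrightarrow> s (addB a b) = addA (s a) (s b)" and s0: "s zB = zA"
    and pB: "\<And>a. a \<in> A \<Longrightarrow> p a \<in> B"
    and ph: "\<And>a b. a \<in> A \<Longrightarrow> b \<in> A \<Longrightarrow> p (addA a b) = addB (p a) (p b)" and p0: "p zA = zB"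
    and ps: "\<And>b. b \<in> B \<Longrightarrow> p (s b) = b"
    and qk: "\<And>x. x \<in> X \<Longrightarrow> q (k x) = x"
    and pk: "\<And>x. x \<in> X \<Longrightarrow> p (k x) = zB"
    and qs: "\<And>b. b \<in> B \<Longrightarrow> q (s b) = q zA"
    and kqsp: "\<And>a. a \<in> A \<Longrightarrow> addA (k (q a)) (s (p a)) = a"
    using assms(2) unfolding retraction_point_def unitary_magma_def um_hom_def by auto
  have Z0: "zZ \<in> Z" and Zc: "\<And>a b. a \<in> Z \<Longrightarrow> b \<in> Z \<Longrightarrow> addZ a b \<in> Z"
    and Zu: "\<And>b. b \<in> Z \<Longrightarrow> addZ b zZ = b \<and> addZ zZ b = b"
    using assms(3) unfolding unitary_magma_def by auto
  have gB: "\<And>a. a \<in> Z \<Longrightarrow> g a \<in> B"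
    and gh: "\<And>a b. a \<in> Z \<Longrightarrow> b \<in> Z \<Longrightarrow> g (addZ a b) = addB (g a) (g b)" and g0: "g zZ = zB"
    using assms(4) unfolding um_hom_def by auto
  have key: "\<And>a z. a \<in> A \<Longrightarrow> p a = g z \<Longrightarrow> addA (k (q a)) (s (g z)) = a"
    using kqsp by metis
  show ?thesis
    unfolding retraction_point_def unitary_magma_def um_hom_def
  proof (intro conjI ballI)
    fix x assume x: "x \<in> X"
    show "(k x, zZ) \<in> {(a, z). a \<in> A \<and> z \<in> Z \<and> p a = g z}" using x kA Z0 pk g0 by simp
  qed (auto simp: A0 Z0 p0 g0 Ac Zc ph gh Au Zu sA gB ps sh s0 qk qX qs Bu pk kA key)
qed

end
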